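(* Let $\widehat q\in L_2(0,\pi)$ be real valued and such that $0$ is an eigenvalue of the problem $-y''+\widehat q(x)y=\lambda y$, $y(0)=y'(\pi)=0$. Let $\widehat S(\rho,x)$ be the solution of $-y''+\widehat qy=\rho^2y$ with $\widehat S(\rho,0)=0$, $\widehat S'(\rho,0)=1$, let $\widehat s_0(x)=3(\widehat S(0,x)/x-1)$ and $\widehat\sigma_0(x)=\widehat s_0(x)/x+\widehat s_0'(x)-\frac32\int_0^x\widehat q(t)\,dt$ (the first NSBF coefficients of $\widehat S$ and $\widehat S'$), and let $\widehat\omega=\frac12\int_0^\pi\widehat q(t)\,dt$. Then $$\widehat\omega=-\frac{\widehat\sigma_0(\pi)}{3}-\frac1\pi.$$ Consequently, for every eigenvalue $\widehat\rho_k^2$ ($\widehat\rho_k>0$) of this problem, the NSBF coefficients $\widehat\sigma_n(\pi)$ of $\widehat S'(\rho,\pi)$ satisfy $$\left(\mathbf j_1(\widehat\rho_k\pi)-\frac{\sin(\widehat\rho_k\pi)}3\right)\widehat\sigma_0(\pi)+\sum_{n=1}^\infty(-1)^n\widehat\sigma_n(\pi)\mathbf j_{2n+1}(\widehat\rho_k\pi)=-\widehat\rho_k\cos(\widehat\rho_k\pi)+\frac{\sin(\widehat\rho_k\pi)}{\pi}.$$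
   Context: $\mathbf j_k$ denotes the spherical Bessel function of the first kind of order $k$. For real $\widehat q\in L_2(0,\pi)$ it is known that $\widehat S'(\rho,x)=\cos(\rho x)+\frac1{2\rho}\left(\int_0^x\widehat q(t)dt\right)\sin(\rho x)+\frac1\rho\sum_{n=0}^\infty(-1)^n\widehat\sigma_n(x)\mathbf j_{2n+1}(\rho x)$ (NSBF representation), with $\rho$-independent coefficients $\widehat\sigma_n(x)$ and $\widehat\sigma_0$ as given, convergent for all $\rho\in\mathbb C$. *)

theory Defs
  imports "HOL-Analysis.Analysis"
begin

definition sph_bessel_j :: "nat \<Rightarrow> complex \<Rightarrow> complex" where
  "sph_bessel_j n z =
     (\<Sum>m. (-1)^m * 2^n * fact (m+n) / (fact m * fact (2*m+2*n+1)) * z^(2*m+n))"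

text \<open>y solves -y'' + q y = lam y on [0,pi] in the Caratheodory sense:
  y is differentiable on [0,pi] with derivative y', and y' is absolutely continuous
  with y'' = (q - lam) y a.e., written in integrated form.\<close>
definition sl_solution ::
  "(real \<Rightarrow> real) \<Rightarrow> complex \<Rightarrow> (real \<Rightarrow> complex) \<Rightarrow> (real \<Rightarrow> complex) \<Rightarrow> bool" where
  "sl_solution q lam y y' \<longleftrightarrow>
     (\<forall>x\<in>{0..pi}. (y has_vector_derivative y' x) (at x within {0..pi}) \<and>
        ((\<lambda>t. (complex_of_real (q t) - lam) * y t) has_integral (y' x - y' 0)) {0..x})"

definition is_eigenvalue :: "(real \<Rightarrow> real) \<Rightarrow> complex \<Rightarrow> bool" where
  "is_eigenvalue q lam \<longleftrightarrow>
     (\<exists>y y'. sl_solution q lam y y' \<and> y 0 = 0 \<and> y' pi = 0 \<and> (\<exists>x\<in>{0..pi}. y x \<noteq> 0))"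

end

theory Submission imports Defs begin

lemma sl_step:
  fixes q :: "real \<Rightarrow> real"
  assumes qi: "(\<lambda>t. \<bar>q t\<bar>) integrable_on {0..pi}"
    and fi: "(\<lambda>t. (complex_of_real (q t) - lam) * z t) integrable_on {0..pi}"
    and der: "\<And>x. x \<in> {0..pi} \<Longrightarrow> (z has_vector_derivative w x) (at x within {0..pi})"
    and int: "\<And>x. x \<in> {0..pi} \<Longrightarrow> ((\<lambda>t. (complex_of_real (q t) - lam) * z t) has_integral (w x - w 0)) {0..x}"
    and cw: "continuous_on {0..pi} w"
    and ab: "0 \<le> a" "a \<le> b" "b \<le> pi"
    and small1: "integral {0..b} (\<lambda>t. \<bar>q t\<bar>) - integral {0..a} (\<lambda>t. \<bar>q t\<bar>) \<le> 1/4"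
    and small2: "(b - a) * (1 + norm lam) \<le> 1/4"
    and zero: "\<And>t. t \<in> {0..a} \<Longrightarrow> z t = 0 \<and> w t = 0"
  shows "\<And>t. t \<in> {0..b} \<Longrightarrow> z t = 0 \<and> w t = 0"
proof -
  let ?f = "\<lambda>t. (complex_of_real (q t) - lam) * z t"
  define u where "u t = norm (z t) + norm (w t)" for t
  have cz: "continuous_on {0..pi} z" using der by (rule continuous_on_vector_derivative)
  have cu: "continuous_on {0..b} u" unfolding u_def
    using ab by (intro continuous_intros continuous_on_subset[OF cz] continuous_on_subset[OF cw]) auto
  obtain x0 where x0: "x0 \<in> {0..b}" and mx: "\<And>t. t \<in> {0..b} \<Longrightarrow> u t \<le> u x0"
    using continuous_attains_sup[OF compact_Icc _ cu] ab by fastforce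
  define M where "M = u x0"
  have M0: "0 \<le> M" unfolding M_def u_def by simp
  have bnd: "u x \<le> 3/4 * M" if x: "x \<in> {0..b}" for x
  proof (cases "x \<le> a")
    case True then show ?thesis using zero[of x] x M0 unfolding u_def by auto
  next
    case False
    hence ax: "a \<le> x" by simp
    have xb: "x \<le> b" using x by simp
    have zz: "(w has_integral (z x - z a)) {a..x}"
      apply (rule fundamental_theorem_of_calculus[OF ax])
      apply (rule has_vector_derivative_within_subset[OF der])
      using ab xb by auto
    have wb: "norm (w t) \<le> M" if "t \<in> {a..x}" for t
    proof -
      have "u t \<le> M" using mx[of t] that ab xb unfolding M_def by auto
      then show ?thesis unfolding u_def using norm_ge_zero[of "z t"] by linarith
    qed
    have "norm (z x - z a) \<le> M * (x - a)"
      using has_integral_bound_real[OF M0 _ zz, of "{}"] wb ax by auto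
    also have "\<dots> \<le> M * (b - a)" using M0 xb by (intro mult_left_mono) auto
    also have "\<dots> \<le> M * (1/4)"
    proof -
      have "b - a \<le> (b - a) * (1 + norm lam)" using ab mult_right_mono[of a b "norm lam"] by (simp add: algebra_simps)
      then show ?thesis using small2 M0 by (intro mult_left_mono) auto
    qed
    finally have nz: "norm (z x) \<le> M/4" using zero[of a] ab by auto
    have fax: "?f integrable_on {a..x}" using integrable_subinterval_real[OF fi] ab xb by auto
    have f0x: "?f integrable_on {0..x}" using integrable_subinterval_real[OF fi] ab xb by auto
    have "integral {0..a} ?f + integral {a..x} ?f = integral {0..x} ?f"
      using Henstock_Kurzweil_Integration.integral_combine[OF ab(1) ax f0x] .
    moreover have "integral {0..x} ?f = w x - w 0" using int[of x] ab xb ax by (auto dest: integral_unique)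
    moreover have "integral {0..a} ?f = w a - w 0" using int[of a] ab xb ax by (auto dest: integral_unique)
    ultimately have wx: "w x = integral {a..x} ?f" using zero[of a] ab by (auto simp: algebra_simps)
    have qax: "(\<lambda>t. \<bar>q t\<bar>) integrable_on {a..x}" using integrable_subinterval_real[OF qi] ab xb by auto
    have gi: "(\<lambda>t. (\<bar>q t\<bar> + norm lam) * M) integrable_on {a..x}"
      using integrable_on_mult_left[OF integrable_add[OF qax integrable_const_ivl[of "norm lam" a x]], of M]
      by (simp add: mult.commute)
    have "norm (w x) \<le> integral {a..x} (\<lambda>t. (\<bar>q t\<bar> + norm lam) * M)"
      unfolding wx
    proof (rule integral_norm_bound_integral[OF fax gi])
      fix t assume t: "t \<in> {a..x}"
      have "u t \<le> M" using mx[of t] t ab xb unfolding M_def by auto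
      then have "norm (z t) \<le> M" unfolding u_def using norm_ge_zero[of "w t"] by linarith
      have "norm (?f t) = norm (complex_of_real (q t) - lam) * norm (z t)" by (simp add: norm_mult)
      also have "\<dots> \<le> (\<bar>q t\<bar> + norm lam) * M"
        apply (rule mult_mono)
        using norm_triangle_ineq4[of "complex_of_real (q t)" lam] \<open>norm (z t) \<le> M\<close> by auto
      finally show "norm (?f t) \<le> (\<bar>q t\<bar> + norm lam) * M" .
    qed
    also have "\<dots> = (integral {a..x} (\<lambda>t. \<bar>q t\<bar>) + norm lam * (x - a)) * M"
      using integral_add[OF qax integrable_const_ivl[of "norm lam" a x]] ax
      by (simp add: integral_mult_left)
    also have "\<dots> \<le> (1/4 + 1/4) * M"
    proof (rule mult_right_mono[OF _ M0])
      have q0x: "(\<lambda>t. \<bar>q t\<bar>) integrable_on {0..x}" using integrable_subinterval_real[OF qi] ab xb by auto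
      have q0b: "(\<lambda>t. \<bar>q t\<bar>) integrable_on {0..b}" using integrable_subinterval_real[OF qi] ab xb by auto
      have e1: "integral {0..a} (\<lambda>t. \<bar>q t\<bar>) + integral {a..x} (\<lambda>t. \<bar>q t\<bar>) = integral {0..x} (\<lambda>t. \<bar>q t\<bar>)"
        using Henstock_Kurzweil_Integration.integral_combine[OF ab(1) ax q0x] .
      have e2: "integral {0..x} (\<lambda>t. \<bar>q t\<bar>) + integral {x..b} (\<lambda>t. \<bar>q t\<bar>) = integral {0..b} (\<lambda>t. \<bar>q t\<bar>)"
        using Henstock_Kurzweil_Integration.integral_combine[OF _ xb q0b] ab ax by auto
      have "0 \<le> integral {x..b} (\<lambda>t. \<bar>q t\<bar>)"
        by (rule integral_nonneg) (use integrable_subinterval_real[OF qi] ab ax xb in auto)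
      hence "integral {a..x} (\<lambda>t. \<bar>q t\<bar>) \<le> 1/4" using e1 e2 small1 by linarith
      moreover have "norm lam * (x - a) \<le> 1/4"
      proof -
        have "norm lam * (x - a) \<le> (1 + norm lam) * (b - a)" using ax xb
          by (intro mult_mono) auto
        then show ?thesis using small2 by (simp add: algebra_simps)
      qed
      ultimately show "integral {a..x} (\<lambda>t. \<bar>q t\<bar>) + norm lam * (x - a) \<le> 1/4 + 1/4" by linarith
    qed
    finally show ?thesis using nz unfolding u_def by (simp add: field_simps)
  qed
  have "M \<le> 3/4 * M" using bnd[OF x0] unfolding M_def .
  hence M00: "M = 0" using M0 by linarith
  fix t assume "t \<in> {0..b}"
  then have "u t \<le> 0" using mx M00 M_def by auto
  then show "z t = 0 \<and> w t = 0" unfolding u_def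
    by (smt (verit) norm_ge_zero norm_eq_zero)
qed

lemma sl_uniq:
  fixes q :: "real \<Rightarrow> real"
  assumes qa: "q absolutely_integrable_on {0..pi}" and sol: "sl_solution q lam z w"
    and z0: "z 0 = 0" and w0: "w 0 = 0" and x: "x \<in> {0..pi}"
  shows "z x = 0 \<and> w x = 0"
proof -
  let ?f = "\<lambda>t. (complex_of_real (q t) - lam) * z t"
  have qi: "(\<lambda>t. \<bar>q t\<bar>) integrable_on {0..pi}" using qa unfolding absolutely_integrable_on_def by auto
  have der: "\<And>x. x \<in> {0..pi} \<Longrightarrow> (z has_vector_derivative w x) (at x within {0..pi})"
    and int: "\<And>x. x \<in> {0..pi} \<Longrightarrow> (?f has_integral (w x - w 0)) {0..x}"
    using sol unfolding sl_solution_def by auto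
  have fi: "?f integrable_on {0..pi}" using int[of pi] by (auto intro: has_integral_integrable)
  have cw: "continuous_on {0..pi} w"
  proof -
    have "continuous_on {0..pi} (\<lambda>x. w 0 + integral {0..x} ?f)"
      by (intro continuous_intros indefinite_integral_continuous_1[OF fi])
    moreover have "\<And>x. x \<in> {0..pi} \<Longrightarrow> w 0 + integral {0..x} ?f = w x"
    proof -
      fix x assume "x \<in> {0..pi}"
      then have "integral {0..x} ?f = w x - w 0" by (rule integral_unique[OF int])
      then show "w 0 + integral {0..x} ?f = w x" by simp
    qed
    ultimately show ?thesis by (rule continuous_on_eq)
  qed
  have "uniformly_continuous_on {0..pi} (\<lambda>x. integral {0..x} (\<lambda>t. \<bar>q t\<bar>))"
    by (intro compact_uniformly_continuous indefinite_integral_continuous_1[OF qi] compact_Icc)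
  then obtain \<delta> where \<delta>: "\<delta> > 0" and \<delta>P: "\<And>a b. a \<in> {0..pi} \<Longrightarrow> b \<in> {0..pi} \<Longrightarrow> dist b a < \<delta> \<Longrightarrow>
       dist (integral {0..b} (\<lambda>t. \<bar>q t\<bar>)) (integral {0..a} (\<lambda>t. \<bar>q t\<bar>)) < 1/4"
  proof -
    have "\<exists>\<delta>>0. \<forall>x\<in>{0..pi}. \<forall>x'\<in>{0..pi}. dist x' x < \<delta> \<longrightarrow>
       dist (integral {0..x'} (\<lambda>t. \<bar>q t\<bar>)) (integral {0..x} (\<lambda>t. \<bar>q t\<bar>)) < 1/4"
      using \<open>uniformly_continuous_on {0..pi} (\<lambda>x. integral {0..x} (\<lambda>t. \<bar>q t\<bar>))\<close>
      unfolding uniformly_continuous_on_def by (rule allE[where x="1/4"]) simp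
    then show ?thesis using that by blast
  qed
  define d where "d = min (\<delta>/2) (1/(4*(1+norm lam)))"
  have d0: "d > 0" unfolding d_def using \<delta> by (simp add: add_pos_nonneg)
  have d1: "d * (1 + norm lam) \<le> 1/4"
  proof -
    have "d \<le> 1/(4*(1+norm lam))" unfolding d_def by simp
    hence "d * (1 + norm lam) \<le> 1/(4*(1+norm lam)) * (1 + norm lam)"
      by (intro mult_right_mono) auto
    also have "\<dots> = 1/4"
    proof -
      have "4 + 4 * norm lam \<noteq> 0" using norm_ge_zero[of lam] by linarith
      then show ?thesis by simp
    qed
    finally show ?thesis .
  qed
  have d2: "d < \<delta>" unfolding d_def using \<delta> by simp
  have claim: "\<forall>t\<in>{0..pi}. t \<le> real n * d \<longrightarrow> z t = 0 \<and> w t = 0" for n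
  proof (induction n)
    case 0
    then show ?case using z0 w0 by auto
  next
    case (Suc n)
    define a where "a = min (real n * d) pi"
    define b where "b = min (real (Suc n) * d) pi"
    have ab: "0 \<le> a" "a \<le> b" "b \<le> pi" unfolding a_def b_def using d0 pi_gt_zero
      by (auto simp: min_def algebra_simps)
    have bad: "b - a \<le> d" unfolding a_def b_def using d0 by (auto simp: min_def algebra_simps)
    have s1: "integral {0..b} (\<lambda>t. \<bar>q t\<bar>) - integral {0..a} (\<lambda>t. \<bar>q t\<bar>) \<le> 1/4"
    proof -
      have "dist b a < \<delta>" using ab bad d2 by (simp add: dist_real_def)
      then have "dist (integral {0..b} (\<lambda>t. \<bar>q t\<bar>)) (integral {0..a} (\<lambda>t. \<bar>q t\<bar>)) < 1/4"
        using \<delta>P[of a b] ab by auto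
      then show ?thesis unfolding dist_real_def by linarith
    qed
    have s2: "(b - a) * (1 + norm lam) \<le> 1/4"
    proof -
      have "(b - a) * (1 + norm lam) \<le> d * (1 + norm lam)"
        using bad by (intro mult_right_mono) auto
      then show ?thesis using d1 by linarith
    qed
    have zero: "\<And>t. t \<in> {0..a} \<Longrightarrow> z t = 0 \<and> w t = 0"
      using Suc.IH ab unfolding a_def by auto
    have "\<And>t. t \<in> {0..b} \<Longrightarrow> z t = 0 \<and> w t = 0"
      by (rule sl_step[OF qi fi der int cw ab s1 s2 zero]) auto
    then show ?case unfolding b_def by auto
  qed
  obtain n where "x / d \<le> real n" using real_arch_simple by blast
  hence "x \<le> real n * d" using d0 by (simp add: field_simps)
  then show ?thesis using claim x by blast
qed

lemma eig_Sd:
  fixes q :: "real \<Rightarrow> real"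
  assumes qa: "q absolutely_integrable_on {0..pi}" and eig: "is_eigenvalue q lam"
    and sol: "sl_solution q lam S Sd" and S0: "S 0 = 0" and Sd0: "Sd 0 = 1"
  shows "Sd pi = 0"
proof -
  obtain y y' where ys: "sl_solution q lam y y'" and y0: "y 0 = 0" and yp: "y' pi = 0"
    and nz: "\<exists>x\<in>{0..pi}. y x \<noteq> 0"
    using eig unfolding is_eigenvalue_def by blast
  define c where "c = y' 0"
  have sl2: "sl_solution q lam (\<lambda>x. y x - c * S x) (\<lambda>x. y' x - c * Sd x)"
    unfolding sl_solution_def
  proof
    fix x assume x: "x \<in> {0..pi}"
    have d1: "(y has_vector_derivative y' x) (at x within {0..pi})"
      and i1: "((\<lambda>t. (complex_of_real (q t) - lam) * y t) has_integral (y' x - y' 0)) {0..x}"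
      using ys x unfolding sl_solution_def by auto
    have d2: "(S has_vector_derivative Sd x) (at x within {0..pi})"
      and i2: "((\<lambda>t. (complex_of_real (q t) - lam) * S t) has_integral (Sd x - Sd 0)) {0..x}"
      using sol x unfolding sl_solution_def by auto
    show "((\<lambda>x. y x - c * S x) has_vector_derivative y' x - c * Sd x) (at x within {0..pi}) \<and>
      ((\<lambda>t. (complex_of_real (q t) - lam) * (y t - c * S t)) has_integral
        (y' x - c * Sd x - (y' 0 - c * Sd 0))) {0..x}"
    proof
      show "((\<lambda>x. y x - c * S x) has_vector_derivative y' x - c * Sd x) (at x within {0..pi})"
        by (intro has_vector_derivative_diff d1 has_vector_derivative_mult_right d2)
      have "((\<lambda>t. (complex_of_real (q t) - lam) * y t - c * ((complex_of_real (q t) - lam) * S t)) has_integral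
          ((y' x - y' 0) - c * (Sd x - Sd 0))) {0..x}"
        by (intro has_integral_diff i1 has_integral_mult_right i2)
      then show "((\<lambda>t. (complex_of_real (q t) - lam) * (y t - c * S t)) has_integral
        (y' x - c * Sd x - (y' 0 - c * Sd 0))) {0..x}"
        by (simp add: algebra_simps)
    qed
  qed
  have z: "y x - c * S x = 0 \<and> y' x - c * Sd x = 0" if "x \<in> {0..pi}" for x
    by (rule sl_uniq[OF qa sl2 _ _ that]) (auto simp: y0 S0 Sd0 c_def)
  have "c \<noteq> 0"
  proof
    assume "c = 0"
    then show False using nz z by auto
  qed
  moreover have "c * Sd pi = 0" using z[of pi] yp by auto
  ultimately show ?thesis by simp
qed

lemma nb: "at pi within {0<..pi} \<noteq> bot"
proof -
  have "{0<..pi} - {pi} = {0<..<pi::real}" by auto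
  then show ?thesis by (simp add: at_within_eq_bot_iff closure_greaterThanLessThan)
qed


lemma a1: fixes s p c :: complex assumes "p \<noteq> 0"
  shows "3 * (s / p - 1) / p - 3 * s / (p^2) - c = - 3 / p - c"
  using assms by (simp add: field_simps power2_eq_square)
lemma a2: fixes p :: complex and I :: real assumes "p \<noteq> 0"
  shows "complex_of_real (1/2 * I) = - (- 3 / p - 3/2 * complex_of_real I) / 3 - 1 / p"
  using assms by (simp add: field_simps)
lemma a3: fixes r C S g I :: complex assumes "r \<noteq> 0"
  and "0 = r * (C + 1 / (2*r) * I * S + 1 / r * g)"
  shows "0 = r * C + I / 2 * S + g"
proof -
  have "r * (C + 1 / (2*r) * I * S + 1 / r * g) = r * C + I / 2 * S + g"
    using assms(1) by (simp add: field_simps)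
  then show ?thesis using assms(2) by simp
qed
lemma a4: fixes j s sig C p :: complex and rk :: real
  assumes "p \<noteq> 0"
  shows "(j - s / 3) * sig + ((- complex_of_real rk * C - (- sig / 3 - 1 / p) * s) - sig * j)
     = - complex_of_real rk * C + s / p"
  using assms by (simp add: field_simps)

theorem mainTheorem3:
  fixes q :: "real \<Rightarrow> real"
    and S Sd :: "complex \<Rightarrow> real \<Rightarrow> complex"
    and \<sigma> :: "nat \<Rightarrow> real \<Rightarrow> complex"
  assumes q_L1: "q absolutely_integrable_on {0..pi}"
    and q_L2: "(\<lambda>t. (q t)^2) integrable_on {0..pi}"
    and eig0: "is_eigenvalue q 0"
    and S_sol: "\<And>\<rho>. sl_solution q (\<rho>^2) (S \<rho>) (Sd \<rho>)"
    and S_init: "\<And>\<rho>. S \<rho> 0 = 0" "\<And>\<rho>. Sd \<rho> 0 = 1"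
    and \<sigma>0: "\<And>x. x \<in> {0<..pi} \<Longrightarrow>
       \<sigma> 0 x = (let s0 = (\<lambda>t. 3 * (S 0 t / complex_of_real t - 1)) in
                  s0 x / complex_of_real x + vector_derivative s0 (at x within {0<..pi})
                  - 3/2 * complex_of_real (integral {0..x} q))"
    and NSBF: "\<And>\<rho> x. \<rho> \<noteq> 0 \<Longrightarrow> x \<in> {0<..pi} \<Longrightarrow>
       summable (\<lambda>n. (-1)^n * \<sigma> n x * sph_bessel_j (2*n+1) (\<rho> * complex_of_real x)) \<and>
       Sd \<rho> x = cos (\<rho> * complex_of_real x)
         + 1 / (2*\<rho>) * complex_of_real (integral {0..x} q) * sin (\<rho> * complex_of_real x)
         + 1 / \<rho> * (\<Sum>n. (-1)^n * \<sigma> n x * sph_bessel_j (2*n+1) (\<rho> * complex_of_real x))"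
  shows "complex_of_real (1/2 * integral {0..pi} q) = - \<sigma> 0 pi / 3 - 1 / complex_of_real pi
    \<and> (\<forall>\<rho>k::real. \<rho>k > 0 \<longrightarrow> is_eigenvalue q (complex_of_real (\<rho>k^2)) \<longrightarrow>
         (sph_bessel_j 1 (complex_of_real (\<rho>k * pi)) - complex_of_real (sin (\<rho>k * pi)) / 3) * \<sigma> 0 pi
         + (\<Sum>n. (-1)^(n+1) * \<sigma> (n+1) pi * sph_bessel_j (2*(n+1)+1) (complex_of_real (\<rho>k * pi)))
         = complex_of_real (- \<rho>k * cos (\<rho>k * pi) + sin (\<rho>k * pi) / pi))"
proof -
  have Sd00: "Sd 0 pi = 0"
  proof -
    have "sl_solution q 0 (S 0) (Sd 0)" using S_sol[of 0] by simp
    then show ?thesis by (rule eig_Sd[of q 0 "S 0" "Sd 0", OF q_L1 eig0 _ S_init(1) S_init(2)])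
  qed
  define I where "I = integral {0..pi} q"
  have derS: "(S 0 has_vector_derivative Sd 0 pi) (at pi within {0<..pi})"
  proof -
    have "(S 0 has_vector_derivative Sd 0 pi) (at pi within {0..pi})"
      using S_sol[of 0] pi_gt_zero unfolding sl_solution_def by auto
    then show ?thesis by (rule has_vector_derivative_within_subset) auto
  qed
  have inv: "((\<lambda>t. complex_of_real (inverse t)) has_vector_derivative
      complex_of_real (- inverse (pi^2))) (at pi within {0<..pi})"
    by (rule has_vector_derivative_of_real) (auto intro!: derivative_eq_intros simp: power2_eq_square)
  have eqf: "(\<lambda>t. 3 * (S 0 t / complex_of_real t - 1)) = (\<lambda>t. 3 * (S 0 t * complex_of_real (inverse t) - 1))"
    by (simp add: divide_inverse)
  have "((\<lambda>t. 3 * (S 0 t * complex_of_real (inverse t) - 1)) has_vector_derivative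
      3 * ((S 0 pi * complex_of_real (- inverse (pi^2)) + Sd 0 pi * complex_of_real (inverse pi)) - 0))
      (at pi within {0<..pi})"
    by (intro has_vector_derivative_mult_right has_vector_derivative_diff has_vector_derivative_mult
        derS inv has_vector_derivative_const)
  hence vd: "vector_derivative (\<lambda>t. 3 * (S 0 t / complex_of_real t - 1)) (at pi within {0<..pi})
      = - 3 * S 0 pi / complex_of_real (pi^2)"
    unfolding eqf using vector_derivative_within[OF nb] Sd00
    by (simp add: divide_inverse mult.assoc)
  have sig: "\<sigma> 0 pi = - 3 / complex_of_real pi - 3/2 * complex_of_real I"
  proof -
    have "\<sigma> 0 pi = 3 * (S 0 pi / complex_of_real pi - 1) / complex_of_real pi
       - 3 * S 0 pi / complex_of_real (pi^2) - 3/2 * complex_of_real I"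
      using \<sigma>0[of pi] vd unfolding I_def by (simp add: Let_def)
    also have "\<dots> = - 3 / complex_of_real pi - 3/2 * complex_of_real I"
      unfolding of_real_power by (rule a1) simp
    finally show ?thesis .
  qed
  have part1: "complex_of_real (1/2 * I) = - \<sigma> 0 pi / 3 - 1 / complex_of_real pi"
    unfolding sig by (rule a2) simp
  show ?thesis
  proof (intro conjI allI impI)
    show "complex_of_real (1/2 * integral {0..pi} q) = - \<sigma> 0 pi / 3 - 1 / complex_of_real pi"
      using part1 unfolding I_def .
  next
    fix \<rho>k :: real assume pos: "\<rho>k > 0" and eigk: "is_eigenvalue q (complex_of_real (\<rho>k^2))"
    define \<rho> where "\<rho> = complex_of_real \<rho>k"
    have \<rho>0: "\<rho> \<noteq> 0" using pos unfolding \<rho>_def by simp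
    have Sdk: "Sd \<rho> pi = 0"
    proof -
      have "sl_solution q (complex_of_real (\<rho>k^2)) (S \<rho>) (Sd \<rho>)" using S_sol[of \<rho>] unfolding \<rho>_def by simp
      then show ?thesis by (rule eig_Sd[of q _ "S \<rho>" "Sd \<rho>", OF q_L1 eigk _ S_init(1) S_init(2)])
    qed
    define g where "g n = (-1)^n * \<sigma> n pi * sph_bessel_j (2*n+1) (\<rho> * complex_of_real pi)" for n
    have sm: "summable g" and eq: "Sd \<rho> pi = cos (\<rho> * complex_of_real pi)
         + 1 / (2*\<rho>) * complex_of_real I * sin (\<rho> * complex_of_real pi)
         + 1 / \<rho> * suminf g"
      using NSBF[OF \<rho>0, of pi] pi_gt_zero unfolding g_def I_def by auto
    have arg: "\<rho> * complex_of_real pi = complex_of_real (\<rho>k * pi)" unfolding \<rho>_def by simp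
    have cs: "cos (\<rho> * complex_of_real pi) = complex_of_real (cos (\<rho>k * pi))"
      "sin (\<rho> * complex_of_real pi) = complex_of_real (sin (\<rho>k * pi))"
      unfolding \<rho>_def by (simp_all flip: of_real_mult cos_of_real sin_of_real)
    have sg: "suminf g = - \<rho> * complex_of_real (cos (\<rho>k * pi))
        - complex_of_real I / 2 * complex_of_real (sin (\<rho>k * pi))"
    proof -
      have "0 = cos (\<rho> * complex_of_real pi)
         + 1 / (2*\<rho>) * complex_of_real I * sin (\<rho> * complex_of_real pi) + 1 / \<rho> * suminf g"
        using eq Sdk by simp
      then have "0 = \<rho> * (cos (\<rho> * complex_of_real pi)
         + 1 / (2*\<rho>) * complex_of_real I * sin (\<rho> * complex_of_real pi) + 1 / \<rho> * suminf g)"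
        by simp
      then have "0 = \<rho> * cos (\<rho> * complex_of_real pi)
         + complex_of_real I / 2 * sin (\<rho> * complex_of_real pi) + suminf g"
        by (rule a3[OF \<rho>0])
      then show ?thesis unfolding cs by (simp add: algebra_simps eq_neg_iff_add_eq_0)
    qed
    have tail: "(\<Sum>n. (-1)^(n+1) * \<sigma> (n+1) pi * sph_bessel_j (2*(n+1)+1) (complex_of_real (\<rho>k * pi)))
        = suminf g - g 0"
      using suminf_split_head[OF sm] unfolding g_def arg by simp
    have g0: "g 0 = \<sigma> 0 pi * sph_bessel_j 1 (complex_of_real (\<rho>k * pi))"
      unfolding g_def arg by simp
    have Ieq: "complex_of_real I / 2 = - \<sigma> 0 pi / 3 - 1 / complex_of_real pi"
      using part1 by simp
    show "(sph_bessel_j 1 (complex_of_real (\<rho>k * pi)) - complex_of_real (sin (\<rho>k * pi)) / 3) * \<sigma> 0 pi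
         + (\<Sum>n. (-1)^(n+1) * \<sigma> (n+1) pi * sph_bessel_j (2*(n+1)+1) (complex_of_real (\<rho>k * pi)))
         = complex_of_real (- \<rho>k * cos (\<rho>k * pi) + sin (\<rho>k * pi) / pi)"
    proof -
      have "(sph_bessel_j 1 (complex_of_real (\<rho>k * pi)) - complex_of_real (sin (\<rho>k * pi)) / 3) * \<sigma> 0 pi
         + ((- complex_of_real \<rho>k * complex_of_real (cos (\<rho>k * pi))
             - (- \<sigma> 0 pi / 3 - 1 / complex_of_real pi) * complex_of_real (sin (\<rho>k * pi)))
            - \<sigma> 0 pi * sph_bessel_j 1 (complex_of_real (\<rho>k * pi)))
         = - complex_of_real \<rho>k * complex_of_real (cos (\<rho>k * pi)) + complex_of_real (sin (\<rho>k * pi)) / complex_of_real pi"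
        by (rule a4) simp
      also have "\<dots> = complex_of_real (- \<rho>k * cos (\<rho>k * pi) + sin (\<rho>k * pi) / pi)" by simp
      finally show ?thesis unfolding tail sg g0 Ieq \<rho>_def .
    qed
  qed
qed

end
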